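(* Let $n\ge 3$ and let $t:\{2,\dots,n-1\}\to[0,\infty)$ be arbitrary (the time to evaluate all coalitions of each size). For $S\subseteq\{2,\dots,n-1\}$ put $T(S)=\sum_{s\in S}t(s)$. Call a pair $(S_1,S_2)$ of subsets of $\{2,\dots,n-1\}$ covering if every integer partition of $n$ is reachable from $[n]$ in $G_{S_1\cup\{n\}}$ or in $G_{S_2\cup\{n\}}$. Then $$\min_{(S_1,S_2)\ \text{covering}}\ \max\big(T(S_1),T(S_2)\big)\;\le\;T\big(\{2,3,\dots,\lfloor 2n/3\rfloor\}\big),$$ i.e., the run time of CDP with the pair of size sets chosen by the SSD procedure (a covering pair minimizing $\max(T(S_1),T(S_2))$) is at most the run time of IDP, which evaluates the sizes $\{2,3,\dots,\lfloor 2n/3\rfloor,n\}$.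
   Context: Restricted integer partition graph: for a set $S\subseteq\{2,\dots,n\}$, $G_S$ is the directed graph whose nodes are the integer partitions of $n$ (multisets of positive integers summing to $n$), with an edge from $P$ to $P'$ whenever $P'$ is obtained from $P$ by replacing a single part $x$ of $P$ with $x\in S$ by two positive parts $x_1,x_2$ with $x_1+x_2=x$. The node $[n]$ is the partition with one part. The run time of a pair of size sets is the maximum of the run times of its two sets (they are processed in parallel), and the run time of a size set is the sum of the per-size evaluation times; size $n$ is always evaluated and size $1$ never, so they are excluded from $T$. *)

theory Defs
  imports Complex_Main "HOL-Library.Multiset"
begin

definition int_partition :: "nat \<Rightarrow> nat multiset \<Rightarrow> bool" where
  "int_partition n P \<longleftrightarrow> (\<forall>x\<in>#P. 0 < x) \<and> sum_mset P = n"

definition partition_edge :: "nat \<Rightarrow> nat set \<Rightarrow> nat multiset \<Rightarrow> nat multiset \<Rightarrow> bool" where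
  "partition_edge n S P P' \<longleftrightarrow> int_partition n P \<and> int_partition n P' \<and>
     (\<exists>x x1 x2. x \<in># P \<and> x \<in> S \<and> 0 < x1 \<and> 0 < x2 \<and> x1 + x2 = x \<and>
        P' = P - {#x#} + {#x1, x2#})"

definition reachable_in :: "nat \<Rightarrow> nat set \<Rightarrow> nat multiset \<Rightarrow> bool" where
  "reachable_in n S P \<longleftrightarrow> (partition_edge n S)\<^sup>*\<^sup>* {#n#} P"

definition covering :: "nat \<Rightarrow> nat set \<Rightarrow> nat set \<Rightarrow> bool" where
  "covering n S1 S2 \<longleftrightarrow> S1 \<subseteq> {2..n-1} \<and> S2 \<subseteq> {2..n-1} \<and>
     (\<forall>P. int_partition n P \<longrightarrow>
        reachable_in n (S1 \<union> {n}) P \<or> reachable_in n (S2 \<union> {n}) P)"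

definition run_time :: "(nat \<Rightarrow> real) \<Rightarrow> nat set \<Rightarrow> real" where
  "run_time t S = (\<Sum>s\<in>S. t s)"

end

theory Submission
  imports Defs
begin

lemma pos_sum: "\<forall>x\<in>#Q. 0 < (x::nat) \<Longrightarrow> Q \<noteq> {#} \<Longrightarrow> 0 < sum_mset Q"
  by (metis gr0I less_irrefl multiset_nonemptyE sum_mset_0_iff)

lemma chain:
  assumes "\<forall>x\<in>#Q. 0<x" "\<forall>x\<in>#C. 0<x" "sum_mset C + sum_mset Q = n"
    "sum_mset Q \<le> 2*n div 3" "Q \<noteq> {#}"
  shows "(partition_edge n ({2..2*n div 3} \<union> {n}))\<^sup>*\<^sup>* (add_mset (sum_mset Q) C) (C + Q)"
  using assms
proof (induction Q arbitrary: C)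
  case empty
  then show ?case by simp
next
  case (add a Q)
  show ?case
  proof (cases "Q = {#}")
    case True
    then show ?thesis by simp
  next
    case False
    have qp: "0 < sum_mset Q" using pos_sum[OF _ False] add.prems(1) by simp
    have ap: "0 < a" using add.prems(1) by simp
    have e: "partition_edge n ({2..2*n div 3} \<union> {n}) (add_mset (a + sum_mset Q) C)
              (add_mset (sum_mset Q) (add_mset a C))"
      unfolding partition_edge_def int_partition_def
      apply (intro conjI)
      using add.prems qp ap apply auto[4]
      apply (rule exI[of _ "a + sum_mset Q"], rule exI[of _ a], rule exI[of _ "sum_mset Q"])
      using add.prems qp ap by auto
    have "(partition_edge n ({2..2*n div 3} \<union> {n}))\<^sup>*\<^sup>* (add_mset (sum_mset Q) (add_mset a C)) (add_mset a C + Q)"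
      using add.IH[of "add_mset a C"] add.prems False by auto
    then show ?thesis using e by (simp add: converse_rtranclp_into_rtranclp)
  qed
qed

lemma chain2:
  assumes "\<forall>x\<in>#Q. 0<x" "\<forall>x\<in>#C. 0<x" "sum_mset C + sum_mset Q = n"
    "sum_mset Q \<le> 2*n div 3 \<or> size Q = 1" "Q \<noteq> {#}"
  shows "(partition_edge n ({2..2*n div 3} \<union> {n}))\<^sup>*\<^sup>* (add_mset (sum_mset Q) C) (C + Q)"
proof (cases "size Q = 1")
  case True
  then obtain x where "Q = {#x#}" using size_1_singleton_mset by blast
  then show ?thesis by simp
next
  case False
  then show ?thesis using chain assms by blast
qed

lemma div3: "3*(b::nat) \<le> m \<Longrightarrow> b \<le> m div 3" by presburger

lemma split_exists:
  assumes "int_partition n P" "P \<noteq> {#n#}" "n \<ge> 3"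
  shows "\<exists>A B. P = A + B \<and> A \<noteq> {#} \<and> B \<noteq> {#} \<and>
     (sum_mset A \<le> 2*n div 3 \<or> size A = 1) \<and> sum_mset B \<le> 2*n div 3"
proof -
  let ?Q = "\<lambda>k. \<exists>A. A \<subseteq># P \<and> A \<noteq> {#} \<and> n \<le> 3 * sum_mset A \<and> size A = k"
  have P0: "sum_mset P = n" "\<forall>x\<in>#P. 0 < x" using assms(1) unfolding int_partition_def by auto
  have Pne: "P \<noteq> {#}" using P0 assms(3) by auto
  have "?Q (size P)" using P0 Pne by auto
  then have ex: "?Q (LEAST k. ?Q k)" by (rule LeastI)
  then obtain A where A: "A \<subseteq># P" "A \<noteq> {#}" "n \<le> 3 * sum_mset A" "size A = (LEAST k. ?Q k)"
    by blast
  have minA: "\<And>A'. A' \<subseteq># P \<Longrightarrow> A' \<noteq> {#} \<Longrightarrow> n \<le> 3 * sum_mset A' \<Longrightarrow> size A \<le> size A'"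
  proof -
    fix A' assume "A' \<subseteq># P" "A' \<noteq> {#}" "n \<le> 3 * sum_mset A'"
    then have "?Q (size A')" by blast
    then have "(LEAST k. ?Q k) \<le> size A'" by (rule Least_le)
    then show "size A \<le> size A'" using A(4) by simp
  qed
  define B where "B = P - A"
  have PAB: "P = A + B" using A(1) B_def by simp
  have sAB: "sum_mset A + sum_mset B = n" using PAB P0 by simp
  show ?thesis
  proof (cases "size A = 1")
    case True
    then obtain p where Ap: "A = {#p#}" using size_1_singleton_mset by blast
    have "B \<noteq> {#}" proof
      assume "B = {#}" then have "P = {#p#}" "p = n" using PAB Ap sAB by auto
      then show False using assms(2) by simp
    qed
    moreover have "sum_mset B \<le> 2*n div 3" using sAB A(3) by (intro div3) linarith
    ultimately show ?thesis using PAB A(2) True by blast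
  next
    case False
    then have s2: "size A \<ge> 2" using A(2) by (cases "size A") auto
    obtain x where x: "x \<in># A" using A(2) by blast
    let ?A' = "A - {#x#}"
    have "size ?A' = size A - 1" using x by (simp add: size_Diff_singleton)
    then have "?A' \<noteq> {#}" using s2 by (metis Suc_1 diff_is_0_eq not_less_eq_eq size_empty)
    moreover have "?A' \<subseteq># P" using A(1) by (meson diff_subset_eq_self subset_mset.order_trans)
    moreover have "size ?A' < size A" using x by (simp add: size_Diff1_less)
    ultimately have c1: "3 * sum_mset ?A' < n" using minA[of ?A'] by (meson not_le)
    have xs: "{#x#} \<subseteq># P" using x A(1) by (meson mset_subset_eq_single subset_mset.order_trans)
    have c2: "3 * x < n"
    proof (rule ccontr)
      assume "\<not> 3 * x < n"
      then have "n \<le> 3 * sum_mset {#x#}" by simp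
      then have "size A \<le> size {#x#}" using minA[OF xs] by simp
      then show False using s2 by simp
    qed
    have "sum_mset (add_mset x ?A') = x + sum_mset ?A'" by (simp only: sum_mset.add_mset)
    then have "sum_mset A = sum_mset ?A' + x" unfolding insert_DiffM[OF x] by simp
    then have c3: "3 * sum_mset A < 2 * n" using c1 c2 by linarith
    have "B \<noteq> {#}" proof
      assume "B = {#}" then have "sum_mset A = n" using sAB by simp
      then show False using c3 by linarith
    qed
    moreover have "sum_mset B \<le> 2*n div 3" using sAB A(3) by (intro div3) linarith
    moreover have "sum_mset A \<le> 2*n div 3" using c3 by (intro div3) linarith
    ultimately show ?thesis using PAB A(2) by blast
  qed
qed

lemma reach_all:
  assumes "int_partition n P" "n \<ge> 3"
  shows "reachable_in n ({2..2*n div 3} \<union> {n}) P"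
proof (cases "P = {#n#}")
  case True
  then show ?thesis unfolding reachable_in_def by simp
next
  case False
  then obtain A B where AB: "P = A + B" "A \<noteq> {#}" "B \<noteq> {#}"
     "sum_mset A \<le> 2*n div 3 \<or> size A = 1" "sum_mset B \<le> 2*n div 3"
    using split_exists assms by blast
  have P0: "sum_mset P = n" "\<forall>x\<in>#P. 0 < x" using assms(1) unfolding int_partition_def by auto
  have Ap: "\<forall>x\<in>#A. 0<x" "\<forall>x\<in>#B. 0<x" using P0 AB(1) by auto
  have sA: "0 < sum_mset A" "0 < sum_mset B" using pos_sum Ap AB by auto
  have sAB: "sum_mset A + sum_mset B = n" using P0 AB by simp
  let ?R = "(partition_edge n ({2..2*n div 3} \<union> {n}))\<^sup>*\<^sup>*"
  have e: "partition_edge n ({2..2*n div 3} \<union> {n}) {#n#} {#sum_mset A, sum_mset B#}"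
    unfolding partition_edge_def int_partition_def
    apply (intro conjI)
    using sA sAB assms(2) apply auto[4]
    apply (rule exI[of _ n], rule exI[of _ "sum_mset A"], rule exI[of _ "sum_mset B"])
    using sA sAB by auto
  have r1: "?R (add_mset (sum_mset A) {#sum_mset B#}) ({#sum_mset B#} + A)"
    using chain2[of A "{#sum_mset B#}" n] Ap sA sAB AB by auto
  have r2: "?R (add_mset (sum_mset B) A) (A + B)"
    using chain2[of B A n] Ap sA sAB AB by auto
  have "?R {#n#} (A + B)"
    using e r1 r2 by (simp add: add.commute converse_rtranclp_into_rtranclp rtranclp_trans)
  then show ?thesis unfolding reachable_in_def AB(1) .
qed

theorem lemma1:
  fixes n :: nat and t :: "nat \<Rightarrow> real"
  assumes "n \<ge> 3"
    and "\<And>s. s \<in> {2..n-1} \<Longrightarrow> t s \<ge> 0"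
  shows "Min {max (run_time t S1) (run_time t S2) | S1 S2. covering n S1 S2}
           \<le> run_time t {2..(2 * n) div 3}"
proof -
  let ?S = "{2..(2 * n) div 3}"
  have cov: "covering n ?S ?S"
    unfolding covering_def using reach_all assms(1) by auto
  have fin: "finite {max (run_time t S1) (run_time t S2) | S1 S2. covering n S1 S2}"
  proof -
    have "{max (run_time t S1) (run_time t S2) | S1 S2. covering n S1 S2} \<subseteq>
          (\<lambda>(S1,S2). max (run_time t S1) (run_time t S2)) ` (Pow {2..n-1} \<times> Pow {2..n-1})"
      unfolding covering_def by auto
    then show ?thesis by (rule finite_subset) auto
  qed
  have "max (run_time t ?S) (run_time t ?S) \<in> {max (run_time t S1) (run_time t S2) | S1 S2. covering n S1 S2}"
    using cov by blast
  then show ?thesis using Min_le[OF fin] by fastforce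
qed

end
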